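(* Let $\mathbf{A}\in\mathbb{R}^{r\times n}$ be a matrix whose nonzero entries are bounded in absolute value by $\mathrm{poly}(r)$ and all of whose subdeterminants are either zero or at least $\frac{1}{\mathrm{poly}(r)}$ in absolute value. Let $s\ge1$. Then there is a matrix $\mathbf{A}'\in\mathbb{R}^{r\times n}$, obtained from $\mathbf{A}$ by zeroing out at most $O(r^2s\log(nr))$ columns, such that every column of $\mathbf{A}'$ has leverage score at most $\frac1s$.
   Context: The leverage score of column $\mathbf{a}_i$ of a matrix $\mathbf{M}$ is $\ell_i=\max_{\mathbf{v}:\mathbf{M}^\top\mathbf{v}\neq0}\frac{\langle\mathbf{v},\mathbf{a}_i\rangle^2}{\|\mathbf{M}^\top\mathbf{v}\|_2^2}$ (equivalently $\mathbf{a}_i^\top(\mathbf{M}\mathbf{M}^\top)^{+}\mathbf{a}_i$). *)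

theory Defs
  imports "Jordan_Normal_Form.Matrix" "Jordan_Normal_Form.Determinant" "Jordan_Normal_Form.DL_Submatrix"
begin

definition leverage_score :: "real mat \<Rightarrow> nat \<Rightarrow> real" where
  "leverage_score M i =
     (if \<exists>v \<in> carrier_vec (dim_row M). transpose_mat M *\<^sub>v v \<noteq> 0\<^sub>v (dim_col M)
      then Sup {(v \<bullet> col M i)\<^sup>2 / ((transpose_mat M *\<^sub>v v) \<bullet> (transpose_mat M *\<^sub>v v)) | v.
                 v \<in> carrier_vec (dim_row M) \<and> transpose_mat M *\<^sub>v v \<noteq> 0\<^sub>v (dim_col M)}
      else 0)"

definition zero_cols :: "real mat \<Rightarrow> nat set \<Rightarrow> real mat" where
  "zero_cols A S = mat (dim_row A) (dim_col A) (\<lambda>(i,j). if j \<in> S then 0 else A $$ (i,j))"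

end

theory Submission
  imports Defs
begin

lemma abs_signof: "\<bar>(signof p :: real)\<bar> = 1"
  by (simp add: sign_def)

lemma signof_sq: "(signof p :: real) * signof p = 1"
  by (simp add: sign_def)

lemma det_permute_cols:
  assumes M: "(M :: 'a :: comm_ring_1 mat) \<in> carrier_mat n n" and p: "p permutes {0..<n}"
  shows "det (mat n n (\<lambda>(i,j). M $$ (i, p j))) = signof p * det M"
proof -
  have MT: "transpose_mat M \<in> carrier_mat n n" using M by auto
  have "mat n n (\<lambda>(i,j). M $$ (i, p j)) = transpose_mat (mat n n (\<lambda>(i,j). transpose_mat M $$ (p i, j)))"
    using M p by (intro eq_matI) (auto simp: permutes_in_image)
  hence "det (mat n n (\<lambda>(i,j). M $$ (i, p j))) = det (mat n n (\<lambda>(i,j). transpose_mat M $$ (p i, j)))"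
    by (metis det_transpose carrier_matI dim_row_mat dim_col_mat)
  also have "\<dots> = signof p * det (transpose_mat M)" by (rule det_permute_rows[OF MT p])
  also have "\<dots> = signof p * det M" using det_transpose[OF M] by simp
  finally show ?thesis .
qed

lemma det_bound:
  assumes M: "(M :: real mat) \<in> carrier_mat m m" and b: "\<And>i j. i < m \<Longrightarrow> j < m \<Longrightarrow> \<bar>M $$ (i,j)\<bar> \<le> p"
  shows "\<bar>det M\<bar> \<le> fact m * p ^ m"
proof -
  have "\<bar>det M\<bar> = \<bar>\<Sum>q\<in>{q. q permutes {0..<m}}. signof q * (\<Prod>i = 0..<m. M $$ (i, q i))\<bar>"
    by (simp add: det_def'[OF M])
  also have "\<dots> \<le> (\<Sum>q\<in>{q. q permutes {0..<m}}. \<bar>signof q * (\<Prod>i = 0..<m. M $$ (i, q i))\<bar>)"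
    by (rule sum_abs)
  also have "\<dots> \<le> (\<Sum>q\<in>{q. q permutes {0..<m}}. p ^ m)"
  proof (rule sum_mono)
    fix q assume q: "q \<in> {q. q permutes {0..<m}}"
    have "\<bar>signof q * (\<Prod>i = 0..<m. M $$ (i, q i))\<bar> = (\<Prod>i = 0..<m. \<bar>M $$ (i, q i)\<bar>)"
      by (simp add: abs_mult abs_signof abs_prod)
    also have "\<dots> \<le> (\<Prod>i = 0..<m. p)"
      using q by (intro prod_mono) (auto simp: permutes_in_image b)
    finally show "\<bar>signof q * (\<Prod>i = 0..<m. M $$ (i, q i))\<bar> \<le> p ^ m" by simp
  qed
  also have "\<dots> = fact m * p ^ m"
    by (simp add: card_permutations)
  finally show ?thesis .
qed

definition Mg :: "nat \<Rightarrow> (nat \<Rightarrow> nat \<Rightarrow> real) \<Rightarrow> (nat \<Rightarrow> nat) \<Rightarrow> real mat" where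
  "Mg k B g = mat k k (\<lambda>(a,b). B a (g b))"

lemma CB1:
  assumes T: "finite T"
  shows "det (mat k k (\<lambda>(a,b). \<Sum>t\<in>T. B a t * B b t)) =
    (\<Sum>g\<in>{0..<k} \<rightarrow>\<^sub>E T. (\<Prod>a=0..<k. B a (g a)) * det (Mg k B g))"
proof -
  let ?P = "{p. p permutes {0..<k}}"
  let ?F = "{0..<k} \<rightarrow>\<^sub>E T"
  have G: "mat k k (\<lambda>(a,b). \<Sum>t\<in>T. B a t * B b t) \<in> carrier_mat k k" by auto
  have "det (mat k k (\<lambda>(a,b). \<Sum>t\<in>T. B a t * B b t)) =
     (\<Sum>p\<in>?P. signof p * (\<Prod>a=0..<k. \<Sum>t\<in>T. B a t * B (p a) t))"
    unfolding det_def'[OF G]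
    by (intro sum.cong refl arg_cong2[where f="(*)"] prod.cong) (auto simp: permutes_in_image)
  also have "\<dots> = (\<Sum>p\<in>?P. signof p * (\<Sum>g\<in>?F. \<Prod>a=0..<k. B a (g a) * B (p a) (g a)))"
    using T by (subst prod_sum_PiE) auto
  also have "\<dots> = (\<Sum>p\<in>?P. \<Sum>g\<in>?F. (\<Prod>a=0..<k. B a (g a)) * (signof p * (\<Prod>a=0..<k. B (p a) (g a))))"
    by (simp add: sum_distrib_left prod.distrib algebra_simps)
  also have "\<dots> = (\<Sum>g\<in>?F. (\<Prod>a=0..<k. B a (g a)) * (\<Sum>p\<in>?P. signof p * (\<Prod>a=0..<k. B (p a) (g a))))"
    by (subst sum.swap) (simp add: sum_distrib_left)
  also have "\<dots> = (\<Sum>g\<in>?F. (\<Prod>a=0..<k. B a (g a)) * det (Mg k B g))"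
  proof (intro sum.cong refl arg_cong2[where f="(*)"])
    fix g
    have C: "Mg k B g \<in> carrier_mat k k" by (simp add: Mg_def)
    have CT: "transpose_mat (Mg k B g) \<in> carrier_mat k k" by (simp add: Mg_def)
    have "det (Mg k B g) = det (transpose_mat (Mg k B g))" using det_transpose[OF C] by simp
    also have "\<dots> = (\<Sum>p\<in>?P. signof p * (\<Prod>a=0..<k. B (p a) (g a)))"
      unfolding det_def'[OF CT]
      by (intro sum.cong refl arg_cong2[where f="(*)"] prod.cong) (auto simp: permutes_in_image Mg_def)
    finally show "(\<Sum>p\<in>?P. signof p * (\<Prod>a=0..<k. B (p a) (g a))) = det (Mg k B g)" by simp
  qed
  finally show ?thesis .
qed

lemma PiE_comp_perm:
  assumes p: "p permutes {0..<k}" and g: "g \<in> {0..<k} \<rightarrow>\<^sub>E T"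
  shows "g \<circ> p \<in> {0..<k} \<rightarrow>\<^sub>E T"
proof -
  have "\<And>x. x \<in> {0..<k} \<Longrightarrow> p x \<in> {0..<k}" by (metis p permutes_in_image)
  moreover have "\<And>x. x \<notin> {0..<k} \<Longrightarrow> p x = x" using p by (simp add: permutes_not_in)
  ultimately show ?thesis using g by (auto simp: PiE_def extensional_def Pi_def)
qed

lemma CB2:
  assumes T: "finite T" and p: "p permutes {0..<k}"
  shows "(\<Sum>g\<in>{0..<k} \<rightarrow>\<^sub>E T. (\<Prod>a=0..<k. B a (g a)) * det (Mg k B g)) =
    (\<Sum>g\<in>{0..<k} \<rightarrow>\<^sub>E T. signof p * ((\<Prod>a=0..<k. B a (g (p a))) * det (Mg k B g)))"
proof -
  let ?F = "{0..<k} \<rightarrow>\<^sub>E T"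
  have pi: "inv_into UNIV p permutes {0..<k}" using p by (rule permutes_inv)
  have "(\<Sum>g\<in>?F. (\<Prod>a=0..<k. B a (g a)) * det (Mg k B g)) =
        (\<Sum>g\<in>?F. (\<Prod>a=0..<k. B a ((g \<circ> p) a)) * det (Mg k B (g \<circ> p)))"
  proof (rule sum.reindex_bij_witness[of _ "\<lambda>g. g \<circ> p" "\<lambda>g. g \<circ> inv_into UNIV p"])
    fix g assume "g \<in> ?F"
    show "g \<circ> inv_into UNIV p \<circ> p = g" using p by (simp add: comp_assoc permutes_inv_o)
    show "g \<circ> inv_into UNIV p \<in> ?F" by (rule PiE_comp_perm[OF pi \<open>g \<in> ?F\<close>])
    show "(\<Prod>a=0..<k. B a ((g \<circ> inv_into UNIV p \<circ> p) a)) * det (Mg k B (g \<circ> inv_into UNIV p \<circ> p)) =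
          (\<Prod>a=0..<k. B a (g a)) * det (Mg k B g)"
      using p by (simp add: comp_assoc permutes_inv_o)
  next
    fix g assume "g \<in> ?F"
    show "g \<circ> p \<circ> inv_into UNIV p = g" using p by (simp add: comp_assoc permutes_inv_o)
    show "g \<circ> p \<in> ?F" by (rule PiE_comp_perm[OF p \<open>g \<in> ?F\<close>])
  qed
  also have "\<dots> = (\<Sum>g\<in>?F. signof p * ((\<Prod>a=0..<k. B a (g (p a))) * det (Mg k B g)))"
  proof (intro sum.cong refl)
    fix g
    have "Mg k B (g \<circ> p) = mat k k (\<lambda>(i,j). Mg k B g $$ (i, p j))"
      using p by (intro eq_matI) (auto simp: Mg_def permutes_in_image)
    hence "det (Mg k B (g \<circ> p)) = signof p * det (Mg k B g)"
      using det_permute_cols[OF _ p, of "Mg k B g"] by (simp add: Mg_def)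
    thus "(\<Prod>a=0..<k. B a ((g \<circ> p) a)) * det (Mg k B (g \<circ> p)) =
          signof p * ((\<Prod>a=0..<k. B a (g (p a))) * det (Mg k B g))" by simp
  qed
  finally show ?thesis .
qed

lemma cauchy_binet:
  assumes T: "finite T"
  shows "fact k * det (mat k k (\<lambda>(a,b). \<Sum>t\<in>T. B a t * B b t)) =
    (\<Sum>g\<in>{0..<k} \<rightarrow>\<^sub>E T. (det (Mg k B g))\<^sup>2)"
proof -
  let ?P = "{p. p permutes {0..<k}}"
  let ?F = "{0..<k} \<rightarrow>\<^sub>E T"
  let ?S = "(\<Sum>g\<in>?F. (\<Prod>a=0..<k. B a (g a)) * det (Mg k B g))"
  have "fact k * ?S = (\<Sum>p\<in>?P. ?S)" by (simp add: card_permutations)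
  also have "\<dots> = (\<Sum>p\<in>?P. \<Sum>g\<in>?F. signof p * ((\<Prod>a=0..<k. B a (g (p a))) * det (Mg k B g)))"
    by (rule sum.cong[OF refl], rule CB2[OF T]) simp
  also have "\<dots> = (\<Sum>g\<in>?F. det (Mg k B g) * (\<Sum>p\<in>?P. signof p * (\<Prod>a=0..<k. B a (g (p a)))))"
    by (subst sum.swap) (simp add: sum_distrib_left algebra_simps)
  also have "\<dots> = (\<Sum>g\<in>?F. (det (Mg k B g))\<^sup>2)"
  proof (intro sum.cong refl)
    fix g
    have C: "Mg k B g \<in> carrier_mat k k" by (simp add: Mg_def)
    have "det (Mg k B g) = (\<Sum>p\<in>?P. signof p * (\<Prod>a=0..<k. B a (g (p a))))"
      unfolding det_def'[OF C]
      by (intro sum.cong refl arg_cong2[where f="(*)"] prod.cong) (auto simp: permutes_in_image Mg_def)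
    thus "det (Mg k B g) * (\<Sum>p\<in>?P. signof p * (\<Prod>a=0..<k. B a (g (p a)))) = (det (Mg k B g))\<^sup>2"
      by (simp add: power2_eq_square)
  qed
  finally show ?thesis using CB1[OF T] by simp
qed

lemma sign_aux: "(-1::real)^(Suc k' + c) * (-1)^(l + k') = - ((-1)^(l+c))"
proof -
  have "(-1::real)^k' * (-1)^k' = 1" by (simp add: power_add[symmetric] flip: mult_2)
  hence "(-1::real)^(Suc k' + c) * (-1)^(l + k') = - ((-1)^(l+c)) * ((-1)^k' * (-1)^k')"
    by (simp add: power_add algebra_simps)
  thus ?thesis using \<open>(-1::real)^k' * (-1)^k' = 1\<close> by simp
qed

lemma sign_aux2: "(-1::real)^(k' + c) * (-1)^(l + k') = (-1)^(l+c)"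
proof -
  have "(-1::real)^k' * (-1)^k' = 1" by (simp add: power_add[symmetric] flip: mult_2)
  hence "(-1::real)^(k' + c) * (-1)^(l + k') = ((-1)^(l+c)) * ((-1)^k' * (-1)^k')"
    by (simp add: power_add algebra_simps)
  thus ?thesis using \<open>(-1::real)^k' * (-1)^k' = 1\<close> by simp
qed

lemma matrix_det_lemma:
  assumes M: "(M :: real mat) \<in> carrier_mat k k" and k: "k > 0"
  shows "det (mat k k (\<lambda>(a,b). M $$ (a,b) - x a * x b)) =
         det M - (\<Sum>l<k. \<Sum>c<k. x l * x c * cofactor M l c)"
proof -
  define X where "X = mat (Suc k) (Suc k) (\<lambda>(a,b). if a<k \<and> b<k then M$$(a,b) else if a<k then x a else if b<k then x b else 1)"
  define E where "E = mat (Suc k) (Suc k) (\<lambda>(a,b). if a=b then 1 else if a<k \<and> b=k then - x a else (0::real))"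
  define Y where "Y = mat (Suc k) (Suc k) (\<lambda>(a,b). if a<k \<and> b<k then M$$(a,b) - x a * x b else if a<k then 0 else if b<k then x b else 1)"
  have Xc: "X \<in> carrier_mat (Suc k) (Suc k)" and Ec: "E \<in> carrier_mat (Suc k) (Suc k)"
    and Yc: "Y \<in> carrier_mat (Suc k) (Suc k)" by (auto simp: X_def E_def Y_def)
  have EX: "E * X = Y"
  proof (rule eq_matI)
    fix a b assume a: "a < dim_row Y" and b: "b < dim_col Y"
    hence a': "a < Suc k" and b': "b < Suc k" by (auto simp: Y_def)
    have "(E * X) $$ (a,b) = (\<Sum>z<Suc k. E $$ (a,z) * X $$ (z,b))"
      using a' b' Ec Xc by (auto simp: scalar_prod_def atLeast0LessThan intro!: sum.cong)
    also have "\<dots> = (\<Sum>z<k. E $$ (a,z) * X $$ (z,b)) + E $$ (a,k) * X $$ (k,b)"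
      by simp
    also have "(\<Sum>z<k. E $$ (a,z) * X $$ (z,b)) = (\<Sum>z<k. if z = a then X $$ (a,b) else 0)"
      using a' by (intro sum.cong refl) (auto simp: E_def)
    also have "\<dots> = (if a < k then X $$ (a,b) else 0)" by (simp add: sum.delta)
    finally show "(E * X) $$ (a,b) = Y $$ (a,b)"
      using a' b' by (auto simp: E_def X_def Y_def)
  qed (auto simp: E_def Y_def X_def)
  have detE: "det E = 1"
  proof -
    have "upper_triangular E" by (auto simp: upper_triangular_def E_def)
    hence "det E = prod_list (diag_mat E)" using det_upper_triangular Ec by blast
    also have "diag_mat E = map (\<lambda>_. 1) [0..<Suc k]" by (auto simp: diag_mat_def E_def)
    moreover have "prod_list (map (\<lambda>_. (1::real)) xs) = 1" for xs :: "nat list" by (induct xs) auto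
    ultimately show ?thesis by (simp del: upt_Suc)
  qed
  have "det Y = det X" using det_mult[OF Ec Xc] EX detE by simp
  have detY: "det Y = det (mat k k (\<lambda>(a,b). M $$ (a,b) - x a * x b))"
  proof -
    have "det Y = (\<Sum>i<Suc k. Y $$ (i,k) * cofactor Y i k)"
      by (rule laplace_expansion_column[OF Yc]) simp
    also have "\<dots> = cofactor Y k k" by (simp add: Y_def)
    also have "\<dots> = det (mat_delete Y k k)" by (simp add: cofactor_def)
    also have "mat_delete Y k k = mat k k (\<lambda>(a,b). M $$ (a,b) - x a * x b)"
      by (intro eq_matI) (auto simp: mat_delete_def Y_def)
    finally show ?thesis .
  qed
  obtain k' where kk: "k = Suc k'" using k by (cases k) auto
  have cofX: "cofactor X k c = - (\<Sum>l<k. x l * cofactor M l c)" if c: "c < k" for c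
  proof -
    define Z where "Z = mat_delete X k c"
    have Zc: "Z \<in> carrier_mat k k" using Xc by (simp add: Z_def mat_delete_def)
    have "det Z = (\<Sum>l<k. Z $$ (l,k') * cofactor Z l k')"
      by (rule laplace_expansion_column[OF Zc]) (simp add: kk)
    also have "\<dots> = (\<Sum>l<k. x l * ((-1)^(l+k') * det (mat_delete M l c)))"
    proof (intro sum.cong refl arg_cong2[where f="(*)"])
      fix l assume l: "l \<in> {..<k}"
      show "Z $$ (l,k') = x l" using l c by (auto simp: Z_def mat_delete_def X_def kk)
      have "mat_delete Z l k' = mat_delete M l c"
        using l c M by (intro eq_matI) (auto simp: Z_def mat_delete_def X_def kk)
      thus "cofactor Z l k' = (-1)^(l+k') * det (mat_delete M l c)" by (simp add: cofactor_def)
    qed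
    finally have dZ: "det Z = (\<Sum>l<k. x l * ((-1)^(l+k') * det (mat_delete M l c)))" .
    have "cofactor X k c = (-1)^(k+c) * det Z" by (simp add: cofactor_def Z_def)
    also have "\<dots> = (\<Sum>l<k. x l * ((-1)^(Suc k'+c) * (-1)^(l+k') * det (mat_delete M l c)))"
      unfolding dZ by (simp add: sum_distrib_left kk algebra_simps)
    also have "\<dots> = (\<Sum>l<k. - (x l * cofactor M l c))"
      by (intro sum.cong refl) (simp add: sign_aux sign_aux2 cofactor_def)
    finally show ?thesis by (simp add: sum_negf)
  qed
  have "det X = (\<Sum>c<Suc k. X $$ (k,c) * cofactor X k c)"
    by (rule laplace_expansion_row[OF Xc]) simp
  also have "\<dots> = (\<Sum>c<k. X $$ (k,c) * cofactor X k c) + cofactor X k k" by (simp add: X_def)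
  also have "cofactor X k k = det M"
  proof -
    have "mat_delete X k k = M" using M by (intro eq_matI) (auto simp: mat_delete_def X_def)
    thus ?thesis by (simp add: cofactor_def)
  qed
  also have "(\<Sum>c<k. X $$ (k,c) * cofactor X k c) = (\<Sum>c<k. - (\<Sum>l<k. x l * x c * cofactor M l c))"
  proof (intro sum.cong refl)
    fix c assume c: "c \<in> {..<k}"
    have "X $$ (k,c) = x c" using c by (simp add: X_def)
    thus "X $$ (k,c) * cofactor X k c = - (\<Sum>l<k. x l * x c * cofactor M l c)"
    proof -
      have "x c * (\<Sum>l<k. x l * cofactor M l c) = (\<Sum>l<k. x l * x c * cofactor M l c)"
        by (simp add: sum_distrib_left mult_ac)
      thus ?thesis using cofX[of c] c \<open>X $$ (k,c) = x c\<close> by simp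
    qed
  qed
  finally have "det X = det M - (\<Sum>c<k. \<Sum>l<k. x l * x c * cofactor M l c)"
    by (simp add: sum_negf)
  moreover have "(\<Sum>c<k. \<Sum>l<k. x l * x c * cofactor M l c) = (\<Sum>l<k. \<Sum>c<k. x l * x c * cofactor M l c)"
    by (rule sum.swap)
  ultimately show ?thesis using detY \<open>det Y = det X\<close> by simp
qed

definition mnr :: "real mat \<Rightarrow> nat \<Rightarrow> (nat \<Rightarrow> nat) \<Rightarrow> (nat \<Rightarrow> nat) \<Rightarrow> real" where
  "mnr A k f g = det (mat k k (\<lambda>(x,y). A $$ (f x, g y)))"

definition vanish :: "real mat \<Rightarrow> nat \<Rightarrow> nat set \<Rightarrow> nat \<Rightarrow> bool" where
  "vanish A r T m \<longleftrightarrow> (\<forall>f g. (\<forall>x<m. f x < r) \<longrightarrow> (\<forall>x<m. g x \<in> T) \<longrightarrow> mnr A m f g = 0)"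

definition wc :: "real mat \<Rightarrow> nat \<Rightarrow> (nat \<Rightarrow> nat) \<Rightarrow> (nat \<Rightarrow> nat) \<Rightarrow> nat \<Rightarrow> nat \<Rightarrow> real" where
  "wc A k f0 g0 l i = (-1)^(l+k) * det (mat k k (\<lambda>(a,b). A $$ ((f0(k:=i)) (if a < l then a else Suc a), g0 b)))"

lemma mnr_cong:
  assumes "\<And>x. x < k \<Longrightarrow> f x = f' x" "\<And>x. x < k \<Longrightarrow> g x = g' x"
  shows "mnr A k f g = mnr A k f' g'"
proof -
  have "mat k k (\<lambda>(x,y). A $$ (f x, g y)) = mat k k (\<lambda>(x,y). A $$ (f' x, g' y))"
    using assms by (intro eq_matI) auto
  thus ?thesis by (simp add: mnr_def)
qed

lemma vanish_mono: "vanish A r T m \<Longrightarrow> T' \<subseteq> T \<Longrightarrow> vanish A r T' m"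
  unfolding vanish_def by blast

lemma factR:
  assumes V: "vanish A r T (Suc k)" and f0: "\<forall>x<k. f0 x < r" and g0: "\<forall>x<k. g0 x \<in> T"
    and i: "i < r" and t: "t \<in> T"
  shows "mnr A k f0 g0 * A $$ (i,t) = - (\<Sum>l<k. A $$ (f0 l, t) * wc A k f0 g0 l i)"
proof -
  define N where "N = mat (Suc k) (Suc k) (\<lambda>(a,b). A $$ ((f0(k:=i)) a, (g0(k:=t)) b))"
  have Nc: "N \<in> carrier_mat (Suc k) (Suc k)" by (simp add: N_def)
  have "det N = mnr A (Suc k) (f0(k:=i)) (g0(k:=t))" by (simp add: N_def mnr_def)
  also have "\<dots> = 0" using V f0 g0 i t unfolding vanish_def
    by (metis fun_upd_apply less_Suc_eq)
  finally have d0: "det N = 0" .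
  have "det N = (\<Sum>l<Suc k. N $$ (l,k) * cofactor N l k)"
    by (rule laplace_expansion_column[OF Nc]) simp
  also have "\<dots> = (\<Sum>l<k. N $$ (l,k) * cofactor N l k) + N $$ (k,k) * cofactor N k k" by simp
  also have "(\<Sum>l<k. N $$ (l,k) * cofactor N l k) = (\<Sum>l<k. A $$ (f0 l, t) * wc A k f0 g0 l i)"
  proof (intro sum.cong refl)
    fix l assume l: "l \<in> {..<k}"
    have "N $$ (l,k) = A $$ (f0 l, t)" using l by (simp add: N_def)
    moreover have "mat_delete N l k = mat k k (\<lambda>(a,b). A $$ ((f0(k:=i)) (if a < l then a else Suc a), g0 b))"
      by (intro eq_matI) (auto simp: mat_delete_def N_def)
    ultimately show "N $$ (l,k) * cofactor N l k = A $$ (f0 l, t) * wc A k f0 g0 l i"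
      by (simp add: cofactor_def wc_def)
  qed
  also have "cofactor N k k = mnr A k f0 g0"
  proof -
    have "mat_delete N k k = mat k k (\<lambda>(x,y). A $$ (f0 x, g0 y))"
      by (intro eq_matI) (auto simp: mat_delete_def N_def)
    thus ?thesis by (simp add: cofactor_def mnr_def flip: mult_2)
  qed
  also have "N $$ (k,k) = A $$ (i,t)" by (simp add: N_def)
  finally show ?thesis using d0 by (simp add: algebra_simps)
qed

lemma coord:
  assumes V: "vanish A r T (Suc k)" and f0: "\<forall>x<k. f0 x < r" and g0: "\<forall>x<k. g0 x \<in> T"
    and D: "mnr A k f0 g0 \<noteq> 0" and t: "t \<in> T"
  shows "(\<Sum>i<r. v i * A $$ (i,t)) =
     (\<Sum>l<k. (- (\<Sum>i<r. v i * wc A k f0 g0 l i) / mnr A k f0 g0) * A $$ (f0 l, t))"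
proof -
  let ?D = "mnr A k f0 g0"
  have "?D * (\<Sum>i<r. v i * A $$ (i,t)) = (\<Sum>i<r. v i * (?D * A $$ (i,t)))"
    by (simp add: sum_distrib_left algebra_simps)
  also have "\<dots> = (\<Sum>i<r. v i * - (\<Sum>l<k. A $$ (f0 l, t) * wc A k f0 g0 l i))"
    using factR[OF V f0 g0 _ t] by (intro sum.cong refl) auto
  also have "\<dots> = - (\<Sum>i<r. \<Sum>l<k. v i * wc A k f0 g0 l i * A $$ (f0 l, t))"
    by (simp add: sum_distrib_left sum_negf mult_ac)
  also have "(\<Sum>i<r. \<Sum>l<k. v i * wc A k f0 g0 l i * A $$ (f0 l, t)) =
      (\<Sum>l<k. \<Sum>i<r. v i * wc A k f0 g0 l i * A $$ (f0 l, t))" by (rule sum.swap)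
  also have "- (\<Sum>l<k. \<Sum>i<r. v i * wc A k f0 g0 l i * A $$ (f0 l, t)) =
      ?D * (\<Sum>l<k. (- (\<Sum>i<r. v i * wc A k f0 g0 l i) / ?D) * A $$ (f0 l, t))"
  proof -
    have "?D * (\<Sum>l<k. (- (\<Sum>i<r. v i * wc A k f0 g0 l i) / ?D) * A $$ (f0 l, t)) =
       (\<Sum>l<k. ?D * ((- (\<Sum>i<r. v i * wc A k f0 g0 l i) / ?D) * A $$ (f0 l, t)))"
      by (rule sum_distrib_left)
    also have "\<dots> = (\<Sum>l<k. - (\<Sum>i<r. v i * wc A k f0 g0 l i * A $$ (f0 l, t)))"
      using D by (intro sum.cong refl) (simp add: sum_distrib_right)
    also have "\<dots> = - (\<Sum>l<k. \<Sum>i<r. v i * wc A k f0 g0 l i * A $$ (f0 l, t))"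
      by (rule sum_negf)
    finally show ?thesis by simp
  qed
  finally show ?thesis using D by simp
qed

definition Pot :: "real mat \<Rightarrow> nat \<Rightarrow> (nat \<Rightarrow> nat) \<Rightarrow> nat set \<Rightarrow> real" where
  "Pot A k f0 T = (\<Sum>g\<in>{0..<k} \<rightarrow>\<^sub>E T. (mnr A k f0 g)\<^sup>2)"

definition Gm :: "real mat \<Rightarrow> nat \<Rightarrow> (nat \<Rightarrow> nat) \<Rightarrow> nat set \<Rightarrow> real mat" where
  "Gm A k f0 T = mat k k (\<lambda>(a,b). \<Sum>t\<in>T. A $$ (f0 a, t) * A $$ (f0 b, t))"

definition Qf :: "real mat \<Rightarrow> nat \<Rightarrow> nat set \<Rightarrow> (nat \<Rightarrow> real) \<Rightarrow> real" where
  "Qf A r T v = (\<Sum>t\<in>T. (\<Sum>i<r. v i * A $$ (i,t))\<^sup>2)"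

lemma Pot_CB: "finite T \<Longrightarrow> fact k * det (Gm A k f0 T) = Pot A k f0 T"
  using cauchy_binet[of T k "\<lambda>a t. A $$ (f0 a, t)"]
  by (simp add: Gm_def Pot_def mnr_def Mg_def)

lemma Pot_nonneg: "Pot A k f0 T \<ge> 0"
  unfolding Pot_def by (intro sum_nonneg) auto

lemma Pot_pos_ex:
  assumes "Pot A k f0 T > 0"
  shows "\<exists>g\<in>{0..<k} \<rightarrow>\<^sub>E T. mnr A k f0 g \<noteq> 0"
proof (rule ccontr)
  assume "\<not> ?thesis"
  hence "Pot A k f0 T = 0" unfolding Pot_def by (intro sum.neutral) auto
  thus False using assms by simp
qed

lemma cs_sum:
  fixes p q :: "nat \<Rightarrow> real"
  shows "(\<Sum>t\<in>T. p t * q t)\<^sup>2 \<le> (\<Sum>t\<in>T. (p t)\<^sup>2) * (\<Sum>t\<in>T. (q t)\<^sup>2)"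
proof (cases "finite T")
  case False thus ?thesis by simp
next
  case fin: True
  define P where "P = (\<Sum>t\<in>T. (p t)\<^sup>2)"
  define R where "R = (\<Sum>t\<in>T. (q t)\<^sup>2)"
  define S where "S = (\<Sum>t\<in>T. p t * q t)"
  have R0: "R \<ge> 0" unfolding R_def by (intro sum_nonneg) auto
  show ?thesis
  proof (cases "R = 0")
    case True
    hence "\<forall>t\<in>T. (q t)\<^sup>2 = 0" using fin unfolding R_def
      by (subst sum_nonneg_eq_0_iff[symmetric]) auto
    hence "S = 0" unfolding S_def by (intro sum.neutral) auto
    moreover have "0 \<le> (\<Sum>t\<in>T. (p t)\<^sup>2) * (\<Sum>t\<in>T. (q t)\<^sup>2)"
      by (intro mult_nonneg_nonneg sum_nonneg) auto
    ultimately show ?thesis by (simp add: S_def)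
  next
    case False
    hence Rp: "R > 0" using R0 by simp
    have "0 \<le> (\<Sum>t\<in>T. (R * p t - S * q t)\<^sup>2)" by (intro sum_nonneg) auto
    also have "(\<Sum>t\<in>T. (R * p t - S * q t)\<^sup>2) =
       (\<Sum>t\<in>T. R\<^sup>2 * (p t)\<^sup>2 - 2 * R * S * (p t * q t) + S\<^sup>2 * (q t)\<^sup>2)"
      by (intro sum.cong refl) (simp add: power2_eq_square algebra_simps)
    also have "\<dots> = R\<^sup>2 * P - 2 * R * S * S + S\<^sup>2 * R"
      by (simp add: sum.distrib sum_subtractf sum_distrib_left P_def R_def S_def)
    also have "\<dots> = R * (R * P - S\<^sup>2)" by (simp add: power2_eq_square algebra_simps)
    finally have "0 \<le> R * P - S\<^sup>2" using Rp by (simp add: zero_le_mult_iff)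
    thus ?thesis by (simp add: S_def P_def R_def mult.commute)
  qed
qed

lemma bil:
  fixes y z :: "nat \<Rightarrow> real" and B :: "nat \<Rightarrow> nat \<Rightarrow> real"
  shows "(\<Sum>t\<in>T. (\<Sum>l<k. y l * B l t) * (\<Sum>a<k. z a * B a t)) =
         (\<Sum>l<k. y l * (\<Sum>a<k. (\<Sum>t\<in>T. B l t * B a t) * z a))"
proof -
  have "(\<Sum>t\<in>T. (\<Sum>l<k. y l * B l t) * (\<Sum>a<k. z a * B a t)) =
        (\<Sum>t\<in>T. \<Sum>l<k. \<Sum>a<k. y l * (B l t * B a t * z a))"
    by (simp add: sum_product mult_ac)
  also have "\<dots> = (\<Sum>l<k. \<Sum>t\<in>T. \<Sum>a<k. y l * (B l t * B a t * z a))"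
    by (rule sum.swap)
  also have "\<dots> = (\<Sum>l<k. \<Sum>a<k. \<Sum>t\<in>T. y l * (B l t * B a t * z a))"
    by (intro sum.cong refl sum.swap)
  also have "\<dots> = (\<Sum>l<k. y l * (\<Sum>a<k. (\<Sum>t\<in>T. B l t * B a t) * z a))"
    by (simp add: sum_distrib_left sum_distrib_right)
  finally show ?thesis .
qed

lemma adj_row:
  assumes G: "(G :: real mat) \<in> carrier_mat k k" and a: "a < k"
  shows "(\<Sum>b<k. G $$ (a,b) * (\<Sum>c<k. cofactor G c b * x c)) = det G * x a"
proof -
  have M: "G * adj_mat G = det G \<cdot>\<^sub>m 1\<^sub>m k" using adj_mat[OF G] by simp
  have e: "(\<Sum>b<k. G $$ (a,b) * cofactor G c b) = (if a = c then det G else 0)" if c: "c < k" for c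
  proof -
    have "(G * adj_mat G) $$ (a,c) = (det G \<cdot>\<^sub>m 1\<^sub>m k) $$ (a,c)" using M by simp
    moreover have "(G * adj_mat G) $$ (a,c) = (\<Sum>b<k. G $$ (a,b) * cofactor G c b)"
      using G a c by (auto simp: scalar_prod_def adj_mat_def atLeast0LessThan intro!: sum.cong)
    ultimately show ?thesis using a c by simp
  qed
  have "(\<Sum>b<k. G $$ (a,b) * (\<Sum>c<k. cofactor G c b * x c)) =
        (\<Sum>b<k. \<Sum>c<k. x c * (G $$ (a,b) * cofactor G c b))"
    by (simp add: sum_distrib_left mult_ac)
  also have "\<dots> = (\<Sum>c<k. \<Sum>b<k. x c * (G $$ (a,b) * cofactor G c b))" by (rule sum.swap)
  also have "\<dots> = (\<Sum>c<k. x c * (if a = c then det G else 0))"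
    by (intro sum.cong refl) (simp add: e flip: sum_distrib_left)
  also have "\<dots> = det G * x a" using a by (simp add: if_distrib sum.delta cong: if_cong)
  finally show ?thesis .
qed

lemma PiE_into:
  assumes g: "g \<in> {0..<(k::nat)} \<rightarrow>\<^sub>E T" shows "\<forall>x<k. g x \<in> T"
proof (intro allI impI)
  fix x assume "x < k" hence "x \<in> {0..<k}" by simp
  thus "g x \<in> T" by (rule PiE_mem[OF g])
qed

lemma sum_ind:
  assumes y: "y < (r::nat)" shows "(\<Sum>i<r. (if i = y then 1 else 0) * F i) = (F y :: real)"
proof -
  have "(\<Sum>i<r. (if i = y then 1 else 0) * F i) = (\<Sum>i\<in>{..<r}. if i = y then F i else 0)"
    by (intro sum.cong) auto
  also have "\<dots> = F y" using y by (subst sum.delta) auto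
  finally show ?thesis .
qed

lemma decrease:
  assumes V: "vanish A r T (Suc k)" and fin: "finite T" and k: "k > 0"
    and f0: "\<forall>x<k. f0 x < r" and P: "Pot A k f0 T > 0" and j: "j \<in> T" and s: "s > 0"
    and viol: "s * (\<Sum>i<r. v i * A $$ (i,j))\<^sup>2 > Qf A r T v"
  shows "Pot A k f0 (T - {j}) \<le> (1 - 1/s) * Pot A k f0 T"
proof -
  obtain g0 where g0P: "g0 \<in> {0..<k} \<rightarrow>\<^sub>E T" and D: "mnr A k f0 g0 \<noteq> 0"
    using Pot_pos_ex[OF P] by blast
  have g0: "\<forall>x<k. g0 x \<in> T" using PiE_into[OF g0P] .
  define u where "u l = - (\<Sum>i<r. v i * wc A k f0 g0 l i) / mnr A k f0 g0" for l
  define x where "x l = A $$ (f0 l, j)" for l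
  define B where "B l t = A $$ (f0 l, t)" for l t
  have co: "(\<Sum>i<r. v i * A $$ (i,t)) = (\<Sum>l<k. u l * B l t)" if "t \<in> T" for t
    using coord[OF V f0 g0 D that, of v] by (simp add: u_def B_def)
  define G where "G = Gm A k f0 T"
  have Gc: "G \<in> carrier_mat k k" by (simp add: G_def Gm_def)
  have GE: "G $$ (a,b) = (\<Sum>t\<in>T. B a t * B b t)" if "a < k" "b < k" for a b
    using that by (simp add: G_def Gm_def B_def)
  have G': "Gm A k f0 (T - {j}) = mat k k (\<lambda>(a,b). G $$ (a,b) - x a * x b)"
  proof (intro eq_matI)
    fix a b assume ab: "a < dim_row (mat k k (\<lambda>(a,b). G $$ (a,b) - x a * x b))"
       "b < dim_col (mat k k (\<lambda>(a,b). G $$ (a,b) - x a * x b))"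
    hence a: "a < k" and b: "b < k" by auto
    have "(\<Sum>t\<in>T. A $$ (f0 a, t) * A $$ (f0 b, t)) =
          A $$ (f0 a, j) * A $$ (f0 b, j) + (\<Sum>t\<in>T - {j}. A $$ (f0 a, t) * A $$ (f0 b, t))"
      using fin j by (rule sum.remove)
    thus "Gm A k f0 (T - {j}) $$ (a,b) = mat k k (\<lambda>(a,b). G $$ (a,b) - x a * x b) $$ (a,b)"
      using a b by (simp add: Gm_def G_def x_def)
  qed (auto simp: Gm_def)
  define \<beta> where "\<beta> = (\<Sum>l<k. \<Sum>c<k. x l * x c * cofactor G l c)"
  have mdl: "det (Gm A k f0 (T - {j})) = det G - \<beta>"
    unfolding G' \<beta>_def by (rule matrix_det_lemma[OF Gc k])
  define w where "w a = (\<Sum>c<k. cofactor G c a * x c)" for a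
  have Gw: "(\<Sum>b<k. (\<Sum>t\<in>T. B a t * B b t) * w b) = det G * x a" if a: "a < k" for a
  proof -
    have "(\<Sum>b<k. (\<Sum>t\<in>T. B a t * B b t) * w b) = (\<Sum>b<k. G $$ (a,b) * w b)"
      using a by (intro sum.cong refl) (simp add: GE)
    also have "\<dots> = det G * x a" unfolding w_def by (rule adj_row[OF Gc a])
    finally show ?thesis .
  qed
  define ux where "ux = (\<Sum>l<k. u l * x l)"
  define Qu where "Qu = (\<Sum>t\<in>T. (\<Sum>l<k. u l * B l t)\<^sup>2)"
  have Q: "Qf A r T v = Qu" unfolding Qf_def Qu_def by (intro sum.cong refl) (simp add: co)
  have vj: "(\<Sum>i<r. v i * A $$ (i,j)) = ux" using co[OF j] by (simp add: ux_def x_def B_def)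
  have e2: "(\<Sum>t\<in>T. (\<Sum>l<k. u l * B l t) * (\<Sum>a<k. w a * B a t)) = det G * ux"
  proof -
    have "(\<Sum>t\<in>T. (\<Sum>l<k. u l * B l t) * (\<Sum>a<k. w a * B a t)) =
          (\<Sum>l<k. u l * (\<Sum>a<k. (\<Sum>t\<in>T. B l t * B a t) * w a))" by (rule bil)
    also have "\<dots> = (\<Sum>l<k. u l * (det G * x l))" by (intro sum.cong refl) (simp add: Gw)
    also have "\<dots> = det G * ux" by (simp add: ux_def sum_distrib_left mult_ac)
    finally show ?thesis .
  qed
  have e3: "(\<Sum>t\<in>T. (\<Sum>a<k. w a * B a t)\<^sup>2) = det G * \<beta>"
  proof -
    have "(\<Sum>t\<in>T. (\<Sum>a<k. w a * B a t)\<^sup>2) = (\<Sum>t\<in>T. (\<Sum>l<k. w l * B l t) * (\<Sum>a<k. w a * B a t))"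
      by (simp add: power2_eq_square)
    also have "\<dots> = (\<Sum>l<k. w l * (\<Sum>a<k. (\<Sum>t\<in>T. B l t * B a t) * w a))" by (rule bil)
    also have "\<dots> = (\<Sum>l<k. w l * (det G * x l))" by (intro sum.cong refl) (simp add: Gw)
    also have "\<dots> = det G * (\<Sum>l<k. \<Sum>c<k. x l * x c * cofactor G c l)"
      by (simp add: w_def sum_distrib_left sum_distrib_right mult_ac)
    also have "(\<Sum>l<k. \<Sum>c<k. x l * x c * cofactor G c l) = (\<Sum>c<k. \<Sum>l<k. x l * x c * cofactor G c l)"
      by (rule sum.swap)
    also have "\<dots> = \<beta>" unfolding \<beta>_def by (simp add: mult_ac)
    finally show ?thesis .
  qed
  have cs: "(det G * ux)\<^sup>2 \<le> Qu * (det G * \<beta>)"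
    using cs_sum[of "\<lambda>t. \<Sum>l<k. u l * B l t" "\<lambda>t. \<Sum>a<k. w a * B a t" T]
    unfolding e2 e3 Qu_def .
  have potT: "Pot A k f0 T = fact k * det G" using Pot_CB[OF fin] by (simp add: G_def)
  have potT': "Pot A k f0 (T - {j}) = fact k * (det G - \<beta>)"
    using Pot_CB[of "T - {j}" k A f0] fin mdl by simp
  have dG: "det G > 0" using P potT by (simp add: zero_less_mult_iff)
  have Qge: "Qu \<ge> ux\<^sup>2"
  proof -
    have "(\<Sum>l<k. u l * B l j)\<^sup>2 \<le> Qu" unfolding Qu_def
      by (rule member_le_sum[OF j]) (auto simp: fin)
    thus ?thesis by (simp add: ux_def x_def B_def)
  qed
  have viol': "s * ux\<^sup>2 > Qu" using viol Q vj by simp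
  have ux2: "ux\<^sup>2 > 0"
  proof (rule ccontr)
    assume "\<not> ux\<^sup>2 > 0" hence "ux\<^sup>2 = 0" by (simp add: not_less)
    thus False using viol' Qge by simp
  qed
  have Qp: "Qu > 0" using Qge ux2 by linarith
  have h1: "det G * ux\<^sup>2 \<le> Qu * \<beta>"
  proof -
    have "det G * (det G * ux\<^sup>2) \<le> det G * (Qu * \<beta>)"
      using cs by (simp add: power_mult_distrib power2_eq_square mult_ac)
    thus ?thesis using dG by simp
  qed
  have "Qu * det G < s * ux\<^sup>2 * det G" using viol' dG by simp
  also have "\<dots> = s * (det G * ux\<^sup>2)" by (simp add: mult_ac)
  also have "\<dots> \<le> s * (Qu * \<beta>)" using h1 s by simp
  finally have "Qu * det G < Qu * (s * \<beta>)" by (simp add: mult_ac)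
  hence h2: "det G < s * \<beta>" using Qp by simp
  hence "det G / s < \<beta>" using s by (simp add: divide_less_eq mult.commute)
  hence "det G - \<beta> \<le> (1 - 1/s) * det G" by (simp add: algebra_simps)
  hence "fact k * (det G - \<beta>) \<le> fact k * ((1 - 1/s) * det G)"
    by (intro mult_left_mono) auto
  thus ?thesis using potT potT' by (simp add: mult_ac)
qed

lemma drop:
  assumes V: "vanish A r T (Suc k)" and f0: "\<forall>x<k. f0 x < r" and P: "Pot A k f0 T > 0"
    and sub: "T' \<subseteq> T" and fin: "finite T'" and P0: "Pot A k f0 T' = 0"
  shows "vanish A r T' k"
  unfolding vanish_def
proof (intro allI impI)
  fix f1 g1 assume f1: "\<forall>x<k. f1 x < r" and g1: "\<forall>x<k. g1 x \<in> T'"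
  obtain g0 where g0P: "g0 \<in> {0..<k} \<rightarrow>\<^sub>E T" and D: "mnr A k f0 g0 \<noteq> 0"
    using Pot_pos_ex[OF P] by blast
  have g0: "\<forall>x<k. g0 x \<in> T" using PiE_into[OF g0P] .
  define L where "L = mat k k (\<lambda>(a,l). - wc A k f0 g0 l (f1 a) / mnr A k f0 g0)"
  have eq: "mat k k (\<lambda>(x,y). A $$ (f1 x, g1 y)) = L * mat k k (\<lambda>(x,y). A $$ (f0 x, g1 y))"
  proof (rule eq_matI)
    fix a b assume "a < dim_row (L * mat k k (\<lambda>(x,y). A $$ (f0 x, g1 y)))"
      "b < dim_col (L * mat k k (\<lambda>(x,y). A $$ (f0 x, g1 y)))"
    hence a: "a < k" and b: "b < k" by (auto simp: L_def)
    have t: "g1 b \<in> T" using g1 b sub by auto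
    have "(\<Sum>i<r. (\<lambda>i. if i = f1 a then 1 else 0) i * A $$ (i, g1 b)) = A $$ (f1 a, g1 b)"
      using f1 a by (intro sum_ind) auto
    moreover have "(\<Sum>i<r. (\<lambda>i. if i = f1 a then 1 else 0) i * wc A k f0 g0 l i) = wc A k f0 g0 l (f1 a)" for l
      using f1 a by (intro sum_ind) auto
    ultimately have "A $$ (f1 a, g1 b) = (\<Sum>l<k. (- wc A k f0 g0 l (f1 a) / mnr A k f0 g0) * A $$ (f0 l, g1 b))"
      using coord[OF V f0 g0 D t, of "\<lambda>i. if i = f1 a then 1 else 0"] by simp
    thus "mat k k (\<lambda>(x,y). A $$ (f1 x, g1 y)) $$ (a,b) = (L * mat k k (\<lambda>(x,y). A $$ (f0 x, g1 y))) $$ (a,b)"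
      using a b by (simp add: L_def scalar_prod_def atLeast0LessThan)
  qed (auto simp: L_def)
  have "mnr A k f1 g1 = det L * mnr A k f0 g1"
    unfolding mnr_def eq by (rule det_mult) (auto simp: L_def)
  moreover have "mnr A k f0 g1 = 0"
  proof -
    have gr: "restrict g1 {0..<k} \<in> {0..<k} \<rightarrow>\<^sub>E T'" using g1 by auto
    have "mnr A k f0 g1 = mnr A k f0 (restrict g1 {0..<k})" by (rule mnr_cong) auto
    moreover have "(mnr A k f0 (restrict g1 {0..<k}))\<^sup>2 = 0"
    proof -
      have "\<forall>g\<in>{0..<k} \<rightarrow>\<^sub>E T'. (mnr A k f0 g)\<^sup>2 = 0"
        using P0 fin unfolding Pot_def by (subst sum_nonneg_eq_0_iff[symmetric]) (auto intro: finite_PiE)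
      thus ?thesis using gr by blast
    qed
    ultimately show ?thesis by simp
  qed
  ultimately show "mnr A k f1 g1 = 0" by simp
qed

lemma mnr_dup_row:
  assumes "x < m" "y < m" "x \<noteq> y" "f x = f y"
  shows "mnr A m f g = 0"
  unfolding mnr_def
  by (rule det_identical_rows[of _ m x y]) (use assms in \<open>auto intro!: eq_vecI\<close>)

lemma mnr_dup_col:
  assumes "x < m" "y < m" "x \<noteq> y" "g x = g y"
  shows "mnr A m f g = 0"
  unfolding mnr_def
  by (rule det_identical_columns[of _ m x y]) (use assms in \<open>auto intro!: eq_vecI\<close>)

lemma perm_pick:
  assumes inj: "inj_on f {0..<m}"
  obtains q where "q permutes {0..<m}" "\<And>x. x < m \<Longrightarrow> f x = pick (f ` {0..<m}) (q x)"
proof -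
  define I where "I = f ` {0..<m}"
  have fI: "finite I" by (simp add: I_def)
  have cI: "card I = m" using inj by (simp add: I_def card_image)
  define q where "q x = (if x < m then card {a\<in>I. a < f x} else x)" for x
  have pk: "pick I (q x) = f x" if "x < m" for x
    using that pick_card_in_set[of "f x" I] by (simp add: q_def I_def)
  have qlt: "q x < m" if x: "x < m" for x
  proof -
    have "{a\<in>I. a < f x} \<subset> I" using x by (auto simp: I_def)
    hence "card {a\<in>I. a < f x} < card I" by (rule psubset_card_mono[OF fI])
    thus ?thesis using x cI by (simp add: q_def)
  qed
  have qinj: "inj_on q {0..<m}"
  proof (rule inj_onI)
    fix x y assume "x \<in> {0..<m}" "y \<in> {0..<m}" "q x = q y"
    hence "f x = f y" using pk by (metis atLeastLessThan_iff)
    thus "x = y" using inj \<open>x \<in> {0..<m}\<close> \<open>y \<in> {0..<m}\<close> by (auto dest: inj_onD)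
  qed
  have "q ` {0..<m} = {0..<m}" by (rule endo_inj_surj) (use qlt qinj in auto)
  hence "bij_betw q {0..<m} {0..<m}" using qinj by (simp add: bij_betw_def)
  hence "q permutes {0..<m}" by (rule bij_imp_permutes) (simp add: q_def)
  thus ?thesis using that pk by (auto simp: I_def)
qed

lemma mnr_sub:
  assumes A: "A \<in> carrier_mat r n" and fi: "inj_on f {0..<m}" and gi: "inj_on g {0..<m}"
    and fr: "\<forall>x<m. f x < r" and gn: "\<forall>x<m. g x < n"
  shows "\<bar>mnr A m f g\<bar> = \<bar>det (submatrix A (f ` {0..<m}) (g ` {0..<m}))\<bar>"
proof -
  define I where "I = f ` {0..<m}"
  define J where "J = g ` {0..<m}"
  obtain p where p: "p permutes {0..<m}" and fp: "\<And>x. x < m \<Longrightarrow> f x = pick I (p x)"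
    using perm_pick[OF fi] unfolding I_def by blast
  obtain q where q: "q permutes {0..<m}" and gq: "\<And>x. x < m \<Longrightarrow> g x = pick J (q x)"
    using perm_pick[OF gi] unfolding J_def by blast
  have r1: "{i. i < dim_row A \<and> i \<in> I} = I" using A fr by (auto simp: I_def)
  have r2: "{i. i < dim_col A \<and> i \<in> J} = J" using A gn by (auto simp: J_def)
  have cI: "card I = m" using fi by (simp add: I_def card_image)
  have cJ: "card J = m" using gi by (simp add: J_def card_image)
  define S where "S = submatrix A I J"
  have Sc: "S \<in> carrier_mat m m" using r1 r2 cI cJ by (simp add: S_def submatrix_def)
  have Sij: "S $$ (a,b) = A $$ (pick I a, pick J b)" if "a < m" "b < m" for a b
    using that r1 r2 cI cJ by (simp add: S_def submatrix_def)
  define S' where "S' = mat m m (\<lambda>(x,y). S $$ (x, q y))"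
  have S'c: "S' \<in> carrier_mat m m" by (simp add: S'_def)
  have "mat m m (\<lambda>(x,y). A $$ (f x, g y)) = mat m m (\<lambda>(x,y). S' $$ (p x, y))"
    using p q by (intro eq_matI) (auto simp: S'_def Sij fp gq permutes_in_image)
  hence "mnr A m f g = signof p * det S'" using det_permute_rows[OF S'c p] by (simp add: mnr_def)
  also have "det S' = signof q * det S" unfolding S'_def by (rule det_permute_cols[OF Sc q])
  finally have "\<bar>mnr A m f g\<bar> = \<bar>det S\<bar>" by (simp add: abs_mult abs_signof)
  thus ?thesis by (simp add: S_def I_def J_def)
qed

lemma mnr_lb:
  assumes A: "A \<in> carrier_mat r n"
    and H: "\<forall>I J. I \<subseteq> {..<r} \<longrightarrow> J \<subseteq> {..<n} \<longrightarrow> I \<noteq> {} \<longrightarrow> card I = card J \<longrightarrow>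
           det (submatrix A I J) = 0 \<or> \<bar>det (submatrix A I J)\<bar> \<ge> 1 / p"
    and m: "m \<ge> 1" and fr: "\<forall>x<m. f x < r" and gn: "\<forall>x<m. g x < n" and nz: "mnr A m f g \<noteq> 0"
  shows "\<bar>mnr A m f g\<bar> \<ge> 1 / p"
proof -
  have fi: "inj_on f {0..<m}"
  proof (rule inj_onI, rule ccontr)
    fix x y assume "x \<in> {0..<m}" "y \<in> {0..<m}" "f x = f y" "x \<noteq> y"
    thus False using mnr_dup_row[of x m y f A g] nz by auto
  qed
  have gi: "inj_on g {0..<m}"
  proof (rule inj_onI, rule ccontr)
    fix x y assume "x \<in> {0..<m}" "y \<in> {0..<m}" "g x = g y" "x \<noteq> y"
    thus False using mnr_dup_col[of x m y g A f] nz by auto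
  qed
  have e: "\<bar>mnr A m f g\<bar> = \<bar>det (submatrix A (f ` {0..<m}) (g ` {0..<m}))\<bar>"
    by (rule mnr_sub[OF A fi gi fr gn])
  have "f ` {0..<m} \<subseteq> {..<r}" "g ` {0..<m} \<subseteq> {..<n}" "f ` {0..<m} \<noteq> {}"
    "card (f ` {0..<m}) = card (g ` {0..<m})"
    using fr gn m fi gi by (auto simp: card_image)
  with H have "det (submatrix A (f ` {0..<m}) (g ` {0..<m})) = 0 \<or>
     \<bar>det (submatrix A (f ` {0..<m}) (g ` {0..<m}))\<bar> \<ge> 1 / p" by blast
  thus ?thesis using e nz by auto
qed

lemma mnr_ub:
  assumes ent: "\<forall>i<r. \<forall>t<n. \<bar>A $$ (i,t)\<bar> \<le> p"
    and fr: "\<forall>x<m. f x < r" and gn: "\<forall>x<m. g x < n"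
  shows "\<bar>mnr A m f g\<bar> \<le> fact m * p ^ m"
  unfolding mnr_def by (rule det_bound) (use ent fr gn in auto)

definition good :: "real mat \<Rightarrow> nat \<Rightarrow> nat set \<Rightarrow> real \<Rightarrow> bool" where
  "good A r T s \<longleftrightarrow> (\<forall>j\<in>T. \<forall>v. s * (\<Sum>i<r. v i * A $$ (i,j))\<^sup>2 \<le> Qf A r T v)"

lemma Pot_lb:
  assumes A: "A \<in> carrier_mat r n"
    and H: "\<forall>I J. I \<subseteq> {..<r} \<longrightarrow> J \<subseteq> {..<n} \<longrightarrow> I \<noteq> {} \<longrightarrow> card I = card J \<longrightarrow>
           det (submatrix A I J) = 0 \<or> \<bar>det (submatrix A I J)\<bar> \<ge> 1 / p"
    and p: "p > 0" and k: "k \<ge> 1" and f0: "\<forall>x<k. f0 x < r" and T: "T \<subseteq> {..<n}"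
    and P: "Pot A k f0 T > 0"
  shows "Pot A k f0 T \<ge> 1 / p\<^sup>2"
proof -
  obtain g where gP: "g \<in> {0..<k} \<rightarrow>\<^sub>E T" and nz: "mnr A k f0 g \<noteq> 0"
    using Pot_pos_ex[OF P] by blast
  have gn: "\<forall>x<k. g x < n" using PiE_into[OF gP] T by auto
  have lb: "\<bar>mnr A k f0 g\<bar> \<ge> 1 / p" by (rule mnr_lb[OF A H k f0 gn nz])
  have "(1/p)\<^sup>2 \<le> \<bar>mnr A k f0 g\<bar>\<^sup>2" using lb p by (intro power_mono) auto
  hence "1 / p\<^sup>2 \<le> (mnr A k f0 g)\<^sup>2" by (simp add: power_divide)
  also have "\<dots> \<le> Pot A k f0 T" unfolding Pot_def
    by (rule member_le_sum[OF gP]) (use T finite_subset in \<open>auto intro!: finite_PiE\<close>)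
  finally show ?thesis .
qed

lemma Pot_ub:
  assumes ent: "\<forall>i<r. \<forall>t<n. \<bar>A $$ (i,t)\<bar> \<le> p" and p: "p \<ge> 1" and k: "k \<le> r"
    and f0: "\<forall>x<k. f0 x < r" and T: "T \<subseteq> {..<n}" and n: "n \<ge> 1"
  shows "Pot A k f0 T \<le> real n ^ r * (fact r)\<^sup>2 * p ^ (2*r)"
proof -
  have fT: "finite T" using T finite_subset by blast
  have "Pot A k f0 T \<le> (\<Sum>g\<in>{0..<k} \<rightarrow>\<^sub>E T. (fact k * p ^ k)\<^sup>2)" unfolding Pot_def
  proof (rule sum_mono)
    fix g assume gP: "g \<in> {0..<k} \<rightarrow>\<^sub>E T"
    have gn: "\<forall>x<k. g x < n" using PiE_into[OF gP] T by auto
    have "\<bar>mnr A k f0 g\<bar> \<le> fact k * p ^ k" by (rule mnr_ub[OF ent f0 gn])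
    hence "\<bar>mnr A k f0 g\<bar>\<^sup>2 \<le> (fact k * p ^ k)\<^sup>2" by (intro power_mono) auto
    thus "(mnr A k f0 g)\<^sup>2 \<le> (fact k * p ^ k)\<^sup>2" by simp
  qed
  also have "\<dots> = real (card T) ^ k * (fact k * p ^ k)\<^sup>2"
    using fT by (simp add: card_PiE)
  also have "\<dots> \<le> real n ^ r * (fact r * p ^ r)\<^sup>2"
  proof (intro mult_mono)
    have "card T \<le> n" using card_mono[OF _ T] by simp
    hence "real (card T) ^ k \<le> real n ^ k" by (intro power_mono) auto
    also have "\<dots> \<le> real n ^ r" using n k by (intro power_increasing) auto
    finally show "real (card T) ^ k \<le> real n ^ r" .
    have "(fact k :: real) \<le> fact r" using k by (simp add: fact_mono)
    moreover have "p ^ k \<le> p ^ r" using p k by (intro power_increasing) auto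
    ultimately have "fact k * p ^ k \<le> (fact r :: real) * p ^ r"
      using p by (intro mult_mono) auto
    thus "(fact k * p ^ k)\<^sup>2 \<le> (fact r * p ^ r)\<^sup>2" by (intro power_mono) (use p in auto)
  qed auto
  also have "\<dots> = real n ^ r * (fact r)\<^sup>2 * p ^ (2*r)"
    by (simp add: power_mult_distrib power_mult[symmetric] mult.commute)
  finally show ?thesis .
qed

lemma card_diff_remove:
  assumes "finite T" "j \<in> T" "T' \<subseteq> T - {j}"
  shows "card (T - T') = Suc (card ((T - {j}) - T'))"
proof -
  have "T - T' = insert j ((T - {j}) - T')" using assms by auto
  thus ?thesis using assms by (simp add: card_insert_disjoint)
qed

lemma phase:
  assumes A: "A \<in> carrier_mat r n"
    and H: "\<forall>I J. I \<subseteq> {..<r} \<longrightarrow> J \<subseteq> {..<n} \<longrightarrow> I \<noteq> {} \<longrightarrow> card I = card J \<longrightarrow>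
           det (submatrix A I J) = 0 \<or> \<bar>det (submatrix A I J)\<bar> \<ge> 1 / p"
    and p: "p > 0" and k: "k \<ge> 1" and f0: "\<forall>x<k. f0 x < r" and s: "s \<ge> 1"
    and IH: "\<forall>T\<subseteq>{..<n}. vanish A r T k \<longrightarrow> (\<exists>T'\<subseteq>T. good A r T' s \<and> card (T - T') \<le> K)"
  shows "\<forall>T\<subseteq>{..<n}. vanish A r T (Suc k) \<longrightarrow> Pot A k f0 T > 0 \<longrightarrow>
           Pot A k f0 T * (1 - 1/s) ^ m < 1 / p\<^sup>2 \<longrightarrow>
           (\<exists>T'\<subseteq>T. good A r T' s \<and> card (T - T') \<le> m + K)"
proof (induction m)
  case 0
  show ?case
  proof (intro allI impI)
    fix T assume T: "T \<subseteq> {..<n}" and "vanish A r T (Suc k)" and P: "Pot A k f0 T > 0"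
      and lt: "Pot A k f0 T * (1 - 1/s) ^ 0 < 1 / p\<^sup>2"
    have "Pot A k f0 T \<ge> 1 / p\<^sup>2" by (rule Pot_lb[OF A H p k f0 T P])
    thus "\<exists>T'\<subseteq>T. good A r T' s \<and> card (T - T') \<le> 0 + K" using lt by simp
  qed
next
  case (Suc m)
  show ?case
  proof (intro allI impI)
    fix T assume T: "T \<subseteq> {..<n}" and V: "vanish A r T (Suc k)" and P: "Pot A k f0 T > 0"
      and lt: "Pot A k f0 T * (1 - 1/s) ^ Suc m < 1 / p\<^sup>2"
    have fT: "finite T" using T finite_subset by blast
    show "\<exists>T'\<subseteq>T. good A r T' s \<and> card (T - T') \<le> Suc m + K"
    proof (cases "good A r T s")
      case True thus ?thesis by (intro exI[of _ T]) auto
    next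
      case False
      then obtain j v where j: "j \<in> T" and viol: "\<not> s * (\<Sum>i<r. v i * A $$ (i,j))\<^sup>2 \<le> Qf A r T v"
        unfolding good_def by blast
      define T1 where "T1 = T - {j}"
      have T1T: "T1 \<subseteq> T" and T1n: "T1 \<subseteq> {..<n}" and fT1: "finite T1" using T fT by (auto simp: T1_def)
      have dec: "Pot A k f0 T1 \<le> (1 - 1/s) * Pot A k f0 T"
        unfolding T1_def by (rule decrease[OF V fT _ f0 P j, where v=v]) (use k s viol in auto)
      have q0: "0 \<le> 1 - 1/s" using s by simp
      show ?thesis
      proof (cases "Pot A k f0 T1 = 0")
        case True
        have "vanish A r T1 k" by (rule drop[OF V f0 P T1T fT1 True])
        then obtain T' where T': "T' \<subseteq> T1" "good A r T' s" "card (T1 - T') \<le> K"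
          using IH T1n by blast
        have "card (T - T') = Suc (card (T1 - T'))"
          using card_diff_remove[OF fT j] T' by (simp add: T1_def)
        thus ?thesis using T' T1T by (intro exI[of _ T']) auto
      next
        case False
        hence P1: "Pot A k f0 T1 > 0" using Pot_nonneg[of A k f0 T1] by simp
        have "Pot A k f0 T1 * (1 - 1/s) ^ m \<le> (1 - 1/s) * Pot A k f0 T * (1 - 1/s) ^ m"
          using dec q0 by (intro mult_right_mono) auto
        also have "\<dots> = Pot A k f0 T * (1 - 1/s) ^ Suc m" by (simp add: mult_ac)
        finally have lt1: "Pot A k f0 T1 * (1 - 1/s) ^ m < 1 / p\<^sup>2" using lt by simp
        have V1: "vanish A r T1 (Suc k)" using vanish_mono[OF V T1T] .
        obtain T' where T': "T' \<subseteq> T1" "good A r T' s" "card (T1 - T') \<le> m + K"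
          using Suc.IH T1n V1 P1 lt1 by blast
        have "card (T - T') = Suc (card (T1 - T'))"
          using card_diff_remove[OF fT j] T' by (simp add: T1_def)
        thus ?thesis using T' T1T by (intro exI[of _ T']) auto
      qed
    qed
  qed
qed

lemma vanish1_zero:
  assumes V: "vanish A r T 1" and i: "i < r" and t: "t \<in> T"
  shows "A $$ (i,t) = 0"
proof -
  have "mnr A 1 (\<lambda>_. i) (\<lambda>_. t) = 0" using V i t unfolding vanish_def by simp
  moreover have "mnr A 1 (\<lambda>_. i) (\<lambda>_. t) = A $$ (i,t)"
    unfolding mnr_def by (subst det_single) auto
  ultimately show ?thesis by simp
qed

lemma outer:
  assumes A: "A \<in> carrier_mat r n"
    and H: "\<forall>I J. I \<subseteq> {..<r} \<longrightarrow> J \<subseteq> {..<n} \<longrightarrow> I \<noteq> {} \<longrightarrow> card I = card J \<longrightarrow>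
           det (submatrix A I J) = 0 \<or> \<bar>det (submatrix A I J)\<bar> \<ge> 1 / p"
    and ent: "\<forall>i<r. \<forall>t<n. \<bar>A $$ (i,t)\<bar> \<le> p" and p: "p \<ge> 1" and s: "s \<ge> 1" and n: "n \<ge> 1"
    and hN: "real n ^ r * (fact r)\<^sup>2 * p ^ (2*r) * (1 - 1/s) ^ N < 1 / p\<^sup>2"
  shows "k \<le> r \<Longrightarrow> \<forall>T\<subseteq>{..<n}. vanish A r T (Suc k) \<longrightarrow>
            (\<exists>T'\<subseteq>T. good A r T' s \<and> card (T - T') \<le> k * N)"
proof (induction k)
  case 0
  show ?case
  proof (intro allI impI)
    fix T assume T: "T \<subseteq> {..<n}" and V: "vanish A r T (Suc 0)"
    have "good A r T s" unfolding good_def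
    proof (intro ballI allI)
      fix j v assume j: "j \<in> T"
      have "(\<Sum>i<r. v i * A $$ (i,j)) = 0"
        using vanish1_zero[OF _ _ j] V by (intro sum.neutral) auto
      moreover have "Qf A r T v \<ge> 0" unfolding Qf_def by (intro sum_nonneg) auto
      ultimately show "s * (\<Sum>i<r. v i * A $$ (i,j))\<^sup>2 \<le> Qf A r T v" by simp
    qed
    thus "\<exists>T'\<subseteq>T. good A r T' s \<and> card (T - T') \<le> 0 * N" by (intro exI[of _ T]) auto
  qed
next
  case (Suc k)
  hence kr: "Suc k \<le> r" and IH: "\<forall>T\<subseteq>{..<n}. vanish A r T (Suc k) \<longrightarrow>
            (\<exists>T'\<subseteq>T. good A r T' s \<and> card (T - T') \<le> k * N)" by auto
  show ?case
  proof (intro allI impI)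
    fix T assume T: "T \<subseteq> {..<n}" and V: "vanish A r T (Suc (Suc k))"
    show "\<exists>T'\<subseteq>T. good A r T' s \<and> card (T - T') \<le> Suc k * N"
    proof (cases "vanish A r T (Suc k)")
      case True
      then obtain T' where "T' \<subseteq> T" "good A r T' s" "card (T - T') \<le> k * N" using IH T by blast
      thus ?thesis by (intro exI[of _ T']) auto
    next
      case False
      then obtain f0 g where f0: "\<forall>x<Suc k. f0 x < r" and g: "\<forall>x<Suc k. g x \<in> T"
        and nz: "mnr A (Suc k) f0 g \<noteq> 0" unfolding vanish_def by blast
      have gP: "restrict g {0..<Suc k} \<in> {0..<Suc k} \<rightarrow>\<^sub>E T" using g by auto
      have "mnr A (Suc k) f0 (restrict g {0..<Suc k}) = mnr A (Suc k) f0 g" by (rule mnr_cong) auto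
      hence "0 < (mnr A (Suc k) f0 (restrict g {0..<Suc k}))\<^sup>2" using nz by simp
      also have "\<dots> \<le> Pot A (Suc k) f0 T" unfolding Pot_def
        by (rule member_le_sum[OF gP]) (use T finite_subset in \<open>auto intro!: finite_PiE\<close>)
      finally have P: "Pot A (Suc k) f0 T > 0" .
      have ub: "Pot A (Suc k) f0 T \<le> real n ^ r * (fact r)\<^sup>2 * p ^ (2*r)"
        by (rule Pot_ub[OF ent p kr f0 T n])
      have q0: "0 \<le> (1 - 1/s) ^ N" using s by simp
      have "Pot A (Suc k) f0 T * (1 - 1/s) ^ N \<le> real n ^ r * (fact r)\<^sup>2 * p ^ (2*r) * (1 - 1/s) ^ N"
        using ub q0 by (rule mult_right_mono)
      hence lt: "Pot A (Suc k) f0 T * (1 - 1/s) ^ N < 1 / p\<^sup>2" using hN by linarith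
      have ph: "\<forall>T\<subseteq>{..<n}. vanish A r T (Suc (Suc k)) \<longrightarrow> Pot A (Suc k) f0 T > 0 \<longrightarrow>
           Pot A (Suc k) f0 T * (1 - 1/s) ^ N < 1 / p\<^sup>2 \<longrightarrow>
           (\<exists>T'\<subseteq>T. good A r T' s \<and> card (T - T') \<le> N + k * N)"
        by (rule phase[OF A H _ _ f0 s]) (use p IH in auto)
      then obtain T' where "T' \<subseteq> T" "good A r T' s" "card (T - T') \<le> N + k * N"
        using T V P lt by blast
      thus ?thesis by (intro exI[of _ T']) auto
    qed
  qed
qed

lemma vanish_top:
  shows "vanish A r T (Suc r)"
  unfolding vanish_def
proof (intro allI impI)
  fix f g :: "nat \<Rightarrow> nat" assume f: "\<forall>x<Suc r. f x < r"
  have "\<not> inj_on f {0..<Suc r}"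
  proof
    assume inj: "inj_on f {0..<Suc r}"
    have "f ` {0..<Suc r} \<subseteq> {..<r}" using f by auto
    hence "card (f ` {0..<Suc r}) \<le> r" using card_mono[of "{..<r}"] by fastforce
    thus False using inj by (simp add: card_image)
  qed
  then obtain x y where "x \<in> {0..<Suc r}" "y \<in> {0..<Suc r}" "x \<noteq> y" "f x = f y"
    unfolding inj_on_def by blast
  thus "mnr A (Suc r) f g = 0" by (intro mnr_dup_row[of x _ y]) auto
qed

lemma lev_good:
  assumes A: "A \<in> carrier_mat r n" and T: "T \<subseteq> {..<n}" and g: "good A r T s" and s: "s > 0"
    and j: "j < n"
  shows "leverage_score (zero_cols A ({..<n} - T)) j \<le> 1 / s"
proof -
  define M where "M = zero_cols A ({..<n} - T)"
  have Mr: "dim_row M = r" and Mc: "dim_col M = n" using A by (auto simp: M_def zero_cols_def)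
  have Mij: "M $$ (i,t) = (if t \<in> T then A $$ (i,t) else 0)" if "i < r" "t < n" for i t
    using that A by (auto simp: M_def zero_cols_def)
  define X where "X = {(v \<bullet> col M j)\<^sup>2 / ((transpose_mat M *\<^sub>v v) \<bullet> (transpose_mat M *\<^sub>v v)) | v.
                 v \<in> carrier_vec (dim_row M) \<and> transpose_mat M *\<^sub>v v \<noteq> 0\<^sub>v (dim_col M)}"
  have bound: "x \<le> 1 / s" if x: "x \<in> X" for x
  proof -
    obtain v where v: "v \<in> carrier_vec r" and nz: "transpose_mat M *\<^sub>v v \<noteq> 0\<^sub>v n"
      and xv: "x = (v \<bullet> col M j)\<^sup>2 / ((transpose_mat M *\<^sub>v v) \<bullet> (transpose_mat M *\<^sub>v v))"
      using x unfolding X_def Mr Mc by blast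
    define y where "y = transpose_mat M *\<^sub>v v"
    have dy: "dim_vec y = n" by (simp add: y_def Mc)
    have yt: "y $ t = (if t \<in> T then (\<Sum>i<r. v $ i * A $$ (i,t)) else 0)" if t: "t < n" for t
    proof -
      have "y $ t = col M t \<bullet> v" using t Mc by (simp add: y_def)
      also have "\<dots> = (\<Sum>i<r. M $$ (i,t) * v $ i)"
        using v t Mr Mc by (simp add: scalar_prod_def atLeast0LessThan)
      also have "\<dots> = (if t \<in> T then (\<Sum>i<r. v $ i * A $$ (i,t)) else 0)"
        using t by (auto simp: Mij mult.commute intro: sum.neutral)
      finally show ?thesis .
    qed
    have yy: "y \<bullet> y = Qf A r T (\<lambda>i. v $ i)"
    proof -
      have "y \<bullet> y = (\<Sum>t\<in>{0..<n}. (y $ t)\<^sup>2)" using dy by (simp add: scalar_prod_def power2_eq_square)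
      also have "\<dots> = (\<Sum>t\<in>{0..<n}. if t \<in> T then (\<Sum>i<r. v $ i * A $$ (i,t))\<^sup>2 else 0)"
        by (intro sum.cong refl) (simp add: yt)
      also have "\<dots> = (\<Sum>t\<in>{0..<n} \<inter> T. (\<Sum>i<r. v $ i * A $$ (i,t))\<^sup>2)"
        by (simp add: sum.inter_restrict)
      also have "{0..<n} \<inter> T = T" using T by auto
      finally show ?thesis by (simp add: Qf_def)
    qed
    have ypos: "y \<bullet> y > 0"
    proof -
      have "\<exists>t<n. y $ t \<noteq> 0"
      proof (rule ccontr)
        assume "\<not> (\<exists>t<n. y $ t \<noteq> 0)"
        hence "y = 0\<^sub>v n" using dy by (intro eq_vecI) auto
        thus False using nz by (simp add: y_def)
      qed
      then obtain t where t: "t < n" "y $ t \<noteq> 0" by blast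
      have "0 < (y $ t)\<^sup>2" using t by simp
      also have "\<dots> \<le> (\<Sum>t\<in>{0..<n}. (y $ t)\<^sup>2)" using t by (intro member_le_sum) auto
      also have "\<dots> = y \<bullet> y" using dy by (simp add: scalar_prod_def power2_eq_square)
      finally show ?thesis .
    qed
    have vc: "v \<bullet> col M j = (if j \<in> T then (\<Sum>i<r. v $ i * A $$ (i,j)) else 0)"
    proof -
      have "v \<bullet> col M j = (\<Sum>i<r. v $ i * M $$ (i,j))"
        using v j Mr Mc by (simp add: scalar_prod_def atLeast0LessThan)
      also have "\<dots> = (if j \<in> T then (\<Sum>i<r. v $ i * A $$ (i,j)) else 0)"
        using j by (auto simp: Mij intro: sum.neutral)
      finally show ?thesis .
    qed
    show ?thesis
    proof (cases "j \<in> T")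
      case False thus ?thesis using xv vc s by simp
    next
      case True
      have "s * (\<Sum>i<r. v $ i * A $$ (i,j))\<^sup>2 \<le> Qf A r T (\<lambda>i. v $ i)"
        using g True unfolding good_def by blast
      hence "(v \<bullet> col M j)\<^sup>2 \<le> (y \<bullet> y) / s" using vc True yy s by (simp add: field_simps mult.commute)
      hence "(v \<bullet> col M j)\<^sup>2 / (y \<bullet> y) \<le> 1 / s" using ypos s by (simp add: field_simps)
      thus ?thesis using xv by (simp add: y_def)
    qed
  qed
  show ?thesis
  proof (cases "\<exists>v \<in> carrier_vec (dim_row M). transpose_mat M *\<^sub>v v \<noteq> 0\<^sub>v (dim_col M)")
    case True
    hence ne: "X \<noteq> {}" unfolding X_def by blast
    have "Sup X \<le> 1 / s" by (rule cSup_least[OF ne bound])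
    thus ?thesis using True unfolding leverage_score_def M_def[symmetric] X_def by simp
  next
    case False
    thus ?thesis using s unfolding leverage_score_def M_def[symmetric] by simp
  qed
qed

lemma hN_lemma:
  fixes U p s :: real
  assumes U: "U > 0" and p: "p > 0" and s: "s \<ge> 1" and R: "U * p\<^sup>2 \<ge> 1"
  shows "U * (1 - 1/s) ^ (nat \<lceil>s * ln (U * p\<^sup>2)\<rceil> + 1) < 1 / p\<^sup>2"
proof -
  define R where "R = U * p\<^sup>2"
  define N where "N = nat \<lceil>s * ln R\<rceil> + 1"
  have Rp: "R > 0" using R by (simp add: R_def)
  have q0: "0 \<le> 1 - 1/s" using s by simp
  have qe: "1 - 1/s \<le> exp (- (1/s))" using exp_ge_add_one_self[of "- (1/s)"] by simp
  have "(1 - 1/s) ^ N \<le> exp (- (1/s)) ^ N" by (rule power_mono[OF qe q0])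
  also have "\<dots> = exp (real N * (- (1/s)))" by (rule exp_of_nat_mult[symmetric])
  also have "\<dots> < exp (- ln R)"
  proof -
    have "s * ln R \<le> real (nat \<lceil>s * ln R\<rceil>)" by (rule real_nat_ceiling_ge)
    hence "s * ln R < real N" by (simp add: N_def)
    hence "ln R < real N / s" using s by (simp add: field_simps)
    hence "real N * (- (1/s)) < - ln R" by (simp add: field_simps)
    thus ?thesis by simp
  qed
  also have "\<dots> = 1 / R" using Rp by (simp add: exp_minus inverse_eq_divide)
  finally have "(1 - 1/s) ^ N < 1 / R" .
  hence "U * (1 - 1/s) ^ N < U * (1 / R)" using U by (rule mult_strict_left_mono)
  also have "U * (1 / R) = 1 / p\<^sup>2" using U p by (simp add: R_def)
  finally show ?thesis by (simp add: N_def R_def)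
qed

lemma final_arith:
  fixes P a b e d K :: real
  assumes P: "P \<ge> 0" and a: "a \<ge> 0" and b: "b \<ge> 0" and e: "e \<ge> 0" and d: "d \<ge> 0"
    and h: "K \<le> P*a + 2*(P*b) + 4*(P*e) + 4*(P*d*b) + 2*P"
  shows "K \<le> (5 + 4*e + 4*d) * P * (1 + a + b)"
proof -
  have ex: "(5 + 4*e + 4*d) * P * (1 + a + b) = 5*P + 5*(P*a) + 5*(P*b) + 4*(P*e) + 4*(P*e*a) + 4*(P*e*b)
       + 4*(P*d) + 4*(P*d*a) + 4*(P*d*b)" by (simp add: algebra_simps)
  have "P*a \<ge> 0" "P*b \<ge> 0" "P*e*a \<ge> 0" "P*e*b \<ge> 0" "P*d \<ge> 0" "P*d*a \<ge> 0"
    using P a b e d by auto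
  thus ?thesis using h ex P by linarith
qed

lemma lnR_bound:
  fixes n r :: nat and p c' :: real and d :: nat
  assumes n: "n \<ge> 1" and r: "r \<ge> 1" and p: "p \<ge> 1" and c': "c' \<ge> 1" and pc: "p \<le> c' * real r ^ d"
  shows "ln (real n ^ r * (fact r)\<^sup>2 * p ^ (2*r) * p\<^sup>2) \<le>
    real r * ln (real n) + 2 * real r * ln (real r) + (2 * real r + 2) * (ln c' + real d * ln (real r))"
proof -
  have rp: "real r > 0" "real n > 0" using n r by auto
  have f1: "(fact r :: real) \<le> real r ^ r" using fact_le_power[of r, where 'a=real] by simp
  have "(fact r :: real)\<^sup>2 \<le> (real r ^ r)\<^sup>2" by (rule power_mono[OF f1]) simp
  moreover have "p ^ (2*r) * p\<^sup>2 \<le> (c' * real r ^ d) ^ (2*r+2)"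
  proof -
    have "p ^ (2*r) * p\<^sup>2 = p ^ (2*r+2)" by (simp add: power_add power2_eq_square)
    also have "\<dots> \<le> (c' * real r ^ d) ^ (2*r+2)" by (rule power_mono[OF pc]) (use p in simp)
    finally show ?thesis .
  qed
  ultimately have "(fact r)\<^sup>2 * (p ^ (2*r) * p\<^sup>2) \<le> (real r ^ r)\<^sup>2 * (c' * real r ^ d) ^ (2*r+2)"
    using p by (intro mult_mono) auto
  hence "real n ^ r * ((fact r)\<^sup>2 * (p ^ (2*r) * p\<^sup>2)) \<le> real n ^ r * ((real r ^ r)\<^sup>2 * (c' * real r ^ d) ^ (2*r+2))"
    by (intro mult_left_mono) auto
  hence le: "real n ^ r * (fact r)\<^sup>2 * p ^ (2*r) * p\<^sup>2 \<le>
      real n ^ r * (real r ^ r)\<^sup>2 * (c' * real r ^ d) ^ (2*r+2)"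
    by (simp only: mult.assoc)
  have pos: "0 < real n ^ r * (fact r)\<^sup>2 * p ^ (2*r) * p\<^sup>2" using p rp by simp
  have "ln (real n ^ r * (fact r)\<^sup>2 * p ^ (2*r) * p\<^sup>2) \<le> ln (real n ^ r * (real r ^ r)\<^sup>2 * (c' * real r ^ d) ^ (2*r+2))"
    using le pos by (subst ln_le_cancel_iff) auto
  also have "\<dots> = real r * ln (real n) + 2 * (real r * ln (real r)) + real (2*r+2) * (ln c' + real d * ln (real r))"
    using rp c' by (simp add: ln_mult ln_realpow algebra_simps)
  finally show ?thesis by (simp add: algebra_simps)
qed

theorem mainTheorem14:
  fixes c :: real and d :: nat
  assumes "c > 0"
  shows "\<exists>C :: real. C > 0 \<and>
    (\<forall>(r::nat) (n::nat) (A::real mat) (s::real).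
       A \<in> carrier_mat r n \<longrightarrow>
       (\<forall>i<r. \<forall>j<n. A $$ (i,j) \<noteq> 0 \<longrightarrow> \<bar>A $$ (i,j)\<bar> \<le> c * real r ^ d) \<longrightarrow>
       (\<forall>I J. I \<subseteq> {..<r} \<longrightarrow> J \<subseteq> {..<n} \<longrightarrow> I \<noteq> {} \<longrightarrow> card I = card J \<longrightarrow>
           det (submatrix A I J) = 0 \<or> \<bar>det (submatrix A I J)\<bar> \<ge> 1 / (c * real r ^ d)) \<longrightarrow>
       s \<ge> 1 \<longrightarrow>
       (\<exists>S. S \<subseteq> {..<n} \<and>
            real (card S) \<le> C * (real r)\<^sup>2 * s * (1 + ln (real n * real r)) \<and>
            (\<forall>j<n. leverage_score (zero_cols A S) j \<le> 1 / s)))"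
proof -
  define c' where "c' = max c 1"
  define C where "C = 5 + 4 * ln c' + 4 * real d"
  have c'1: "c' \<ge> 1" by (simp add: c'_def)
  have e0: "ln c' \<ge> 0" using c'1 by simp
  have Cpos: "C > 0" using e0 by (simp add: C_def)
  show ?thesis
  proof (intro exI[of _ C] conjI allI impI)
    show "C > 0" by (rule Cpos)
  next
    fix r n :: nat and A :: "real mat" and s :: real
    assume A: "A \<in> carrier_mat r n"
      and ent0: "\<forall>i<r. \<forall>j<n. A $$ (i,j) \<noteq> 0 \<longrightarrow> \<bar>A $$ (i,j)\<bar> \<le> c * real r ^ d"
      and H0: "\<forall>I J. I \<subseteq> {..<r} \<longrightarrow> J \<subseteq> {..<n} \<longrightarrow> I \<noteq> {} \<longrightarrow> card I = card J \<longrightarrow>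
           det (submatrix A I J) = 0 \<or> \<bar>det (submatrix A I J)\<bar> \<ge> 1 / (c * real r ^ d)"
      and s: "s \<ge> 1"
    show "\<exists>S. S \<subseteq> {..<n} \<and>
            real (card S) \<le> C * (real r)\<^sup>2 * s * (1 + ln (real n * real r)) \<and>
            (\<forall>j<n. leverage_score (zero_cols A S) j \<le> 1 / s)"
    proof (cases "r = 0 \<or> n = 0")
      case True
      have g: "good A r {..<n} s" unfolding good_def
      proof (intro ballI allI)
        fix j v assume j: "j \<in> {..<n}"
        have "Qf A r {..<n} v \<ge> 0" unfolding Qf_def by (intro sum_nonneg) auto
        moreover have "r = 0" using True j by auto
        ultimately show "s * (\<Sum>i<r. v i * A $$ (i,j))\<^sup>2 \<le> Qf A r {..<n} v" by simp
      qed
      have "0 \<le> C * (real r)\<^sup>2 * s * (1 + ln (real n * real r))"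
        using True Cpos s by auto
      thus ?thesis using lev_good[OF A _ g _] s
        by (intro exI[of _ "{..<n} - {..<n}"]) auto
    next
      case False
      hence r1: "r \<ge> 1" and n1: "n \<ge> 1" by auto
      define p where "p = max (c * real r ^ d) 1"
      have p1: "p \<ge> 1" by (simp add: p_def)
      have crd: "c * real r ^ d > 0" using \<open>c > 0\<close> r1 by simp
      have pc: "p \<le> c' * real r ^ d"
      proof -
        have rd: "real r ^ d \<ge> 1" using r1 by simp
        have "c * real r ^ d \<le> c' * real r ^ d" using rd by (intro mult_right_mono) (auto simp: c'_def)
        moreover have "1 \<le> c' * real r ^ d" using mult_mono[OF c'1 rd] c'1 by simp
        ultimately show ?thesis by (simp add: p_def)
      qed
      have ent: "\<forall>i<r. \<forall>t<n. \<bar>A $$ (i,t)\<bar> \<le> p"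
      proof (intro allI impI)
        fix i t assume "i < r" "t < n"
        thus "\<bar>A $$ (i,t)\<bar> \<le> p" using ent0 p1 by (cases "A $$ (i,t) = 0") (auto simp: p_def le_max_iff_disj)
      qed
      have H: "\<forall>I J. I \<subseteq> {..<r} \<longrightarrow> J \<subseteq> {..<n} \<longrightarrow> I \<noteq> {} \<longrightarrow> card I = card J \<longrightarrow>
           det (submatrix A I J) = 0 \<or> \<bar>det (submatrix A I J)\<bar> \<ge> 1 / p"
      proof (intro allI impI)
        fix I J assume "I \<subseteq> {..<r}" "J \<subseteq> {..<n}" "I \<noteq> {}" "card I = card J"
        hence h: "det (submatrix A I J) = 0 \<or> \<bar>det (submatrix A I J)\<bar> \<ge> 1 / (c * real r ^ d)"
          using H0 by blast
        have "1 / p \<le> 1 / (c * real r ^ d)" using crd by (intro divide_left_mono) (auto simp: p_def)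
        thus "det (submatrix A I J) = 0 \<or> \<bar>det (submatrix A I J)\<bar> \<ge> 1 / p" using h by linarith
      qed
      define U where "U = real n ^ r * (fact r)\<^sup>2 * p ^ (2*r)"
      define N where "N = nat \<lceil>s * ln (U * p\<^sup>2)\<rceil> + 1"
      have ge1: "1 \<le> x * y" if "1 \<le> x" "1 \<le> y" for x y :: real
        using mult_mono[OF that] that by simp
      have U1: "U \<ge> 1" unfolding U_def
        by (intro ge1 one_le_power) (use n1 p1 in \<open>auto simp: fact_ge_1\<close>)
      have R1: "U * p\<^sup>2 \<ge> 1" using U1 p1 by (intro ge1 one_le_power) auto
      have hN: "U * (1 - 1/s) ^ N < 1 / p\<^sup>2" unfolding N_def
        by (rule hN_lemma) (use U1 p1 s R1 in auto)
      have out: "\<forall>T\<subseteq>{..<n}. vanish A r T (Suc r) \<longrightarrow>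
            (\<exists>T'\<subseteq>T. good A r T' s \<and> card (T - T') \<le> r * N)"
        by (rule outer[OF A H ent p1 s n1]) (use hN in \<open>auto simp: U_def\<close>)
      then obtain T' where T': "T' \<subseteq> {..<n}" "good A r T' s" "card ({..<n} - T') \<le> r * N"
        using vanish_top[of A r "{..<n}"] by blast
      define a where "a = ln (real n)"
      define b where "b = ln (real r)"
      define e where "e = ln c'"
      have a0: "a \<ge> 0" and b0: "b \<ge> 0" using n1 r1 by (auto simp: a_def b_def)
      have lnR: "ln (U * p\<^sup>2) \<le> real r * a + 2 * real r * b + (2 * real r + 2) * (e + real d * b)"
        unfolding U_def a_def b_def e_def by (rule lnR_bound[OF n1 r1 p1 c'1 pc])
      have lnR0: "ln (U * p\<^sup>2) \<ge> 0" using R1 by simp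
      have NN: "real N \<le> s * ln (U * p\<^sup>2) + 2"
      proof -
        have "real (nat \<lceil>s * ln (U * p\<^sup>2)\<rceil>) = of_int \<lceil>s * ln (U * p\<^sup>2)\<rceil>"
          using mult_nonneg_nonneg[OF _ lnR0, of s] s by (intro of_nat_nat) simp
        also have "\<dots> \<le> s * ln (U * p\<^sup>2) + 1" by linarith
        finally show ?thesis by (simp add: N_def)
      qed
      define P where "P = real r * real r * s"
      have card_le: "real (card ({..<n} - T')) \<le> real r * (s * ln (U * p\<^sup>2) + 2)"
      proof -
        have "real (card ({..<n} - T')) \<le> real r * real N" using T'(3) by (simp flip: of_nat_mult)
        also have "\<dots> \<le> real r * (s * ln (U * p\<^sup>2) + 2)" using NN by (intro mult_left_mono) auto
        finally show ?thesis .
      qed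
      have h: "real (card ({..<n} - T')) \<le> P*a + 2*(P*b) + 4*(P*e) + 4*(P*real d*b) + 2*P"
      proof -
        have rs: "real r * s \<ge> 0" using s by simp
        have "real r * (s * ln (U * p\<^sup>2) + 2) = real r * s * ln (U * p\<^sup>2) + 2 * real r"
          by (simp add: algebra_simps)
        also have "\<dots> \<le> real r * s * (real r * a + 2 * real r * b + (2 * real r + 2) * (e + real d * b)) + 2 * real r"
          using lnR rs by (simp add: mult_left_mono)
        also have "\<dots> \<le> P*a + 2*(P*b) + 4*(P*e) + 4*(P*real d*b) + 2*P"
        proof -
          have rr: "2 * real r + 2 \<le> 4 * real r" using r1 by simp
          have ed: "e + real d * b \<ge> 0" using e0 b0 by (simp add: e_def)
          have "real r * s * ((2 * real r + 2) * (e + real d * b)) \<le> real r * s * (4 * real r * (e + real d * b))"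
            using rr ed rs by (intro mult_left_mono mult_right_mono) auto
          moreover have "2 * real r \<le> 2 * P"
          proof -
            have "real r \<le> real r * real r" using r1 by simp
            also have "\<dots> \<le> real r * real r * s"
              using mult_left_mono[OF s, of "real r * real r"] by simp
            finally show ?thesis by (simp add: P_def)
          qed
          moreover have "real r * s * (real r * a + 2 * real r * b + (2 * real r + 2) * (e + real d * b)) =
              P*a + 2*(P*b) + real r * s * ((2 * real r + 2) * (e + real d * b))"
            by (simp add: P_def algebra_simps)
          moreover have "real r * s * (4 * real r * (e + real d * b)) = 4*(P*e) + 4*(P*real d*b)"
            by (simp add: P_def algebra_simps)
          ultimately show ?thesis by linarith
        qed
        finally show ?thesis using card_le by linarith
      qed
      have P0: "P \<ge> 0" using s by (simp add: P_def)
      have fin: "real (card ({..<n} - T')) \<le> (5 + 4*e + 4*real d) * P * (1 + a + b)"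
        by (rule final_arith[OF P0 a0 b0 _ _ h]) (use e0 in \<open>auto simp: e_def\<close>)
      have lnnr: "ln (real n * real r) = a + b" using n1 r1 by (simp add: a_def b_def ln_mult)
      have "real (card ({..<n} - T')) \<le> C * (real r)\<^sup>2 * s * (1 + ln (real n * real r))"
        using fin unfolding lnnr C_def e_def P_def by (simp add: power2_eq_square mult_ac add.assoc)
      moreover have "\<forall>j<n. leverage_score (zero_cols A ({..<n} - T')) j \<le> 1 / s"
        using lev_good[OF A T'(1) T'(2)] s by auto
      ultimately show ?thesis by (intro exI[of _ "{..<n} - T'"]) auto
    qed
  qed
qed


end
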